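(* Let $p,q\in\mathbb R$, $\tilde p=p-2p^2$. The fifth order differential equation \begin{align*} &x^5R^{(5)}+10x^4R^{(4)}+x^3(20x^2-20qx+22+10\tilde p)R'''+x^2(64x^2-76qx+4+44\tilde p)R''\\ &+4x\big(16x^4-32qx^3+4(4q^2+4\tilde p+1)x^2-q(6+16\tilde p)x+4\tilde p^2+7\tilde p-1\big)R'\\ &+8\big(-4qx^3+4(q^2+\tilde p)x^2-q(6\tilde p-1)x+2\tilde p^2\big)R=0 \end{align*} admits a unique formal solution of the form $R(x)=\frac1\pi+\frac1\pi\sum_{n\ge1}\pi^n g_nx^{-n}$, with $$g_1=-\frac{q}{2\pi},\ g_2=\frac{2\tilde p-q^2}{8\pi^2},\ g_3=-\frac{q(-1-2\tilde p+q^2)}{16\pi^3},\ g_4=\frac{-16\tilde p-4\tilde p^2+19q^2+12\tilde pq^2-5q^4}{128\pi^4},$$ and for $n\ge1$ \begin{align*} &64(n+4)\pi^4g_{n+4}-32q(4n+11)\pi^3g_{n+3}\\ &+4\big(32+54n+29n^2+5n^3+8\tilde p(2n+3)+24q^2+16nq^2\big)\pi^2g_{n+2}\\ &-4q\big(4\tilde p(1+4n)+n(4+11n+5n^2)\big)\pi g_{n+1}\\ &+(n-1)\big(16\tilde p^2+2\tilde pn(5n-2)+n^2(n^2+n-2)\big)g_n=0. \end{align*}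
   Context: This differential equation is satisfied by $R(x)=\frac1\pi\rho_{(1),\infty}(x/\pi;4,p,q)$, the rescaled bulk density at the spectrum singularity of the generalised circular Jacobi ensemble with $\beta=4$ (probability density on $(-\pi,\pi]^N$ proportional to $\prod_l e^{q\theta_l}|1+e^{i\theta_l}|^{4p}\prod_{j<k}|e^{i\theta_k}-e^{i\theta_j}|^4$, scaled density $\rho_{(1),\infty}(x)=\lim_{N\to\infty}\frac{2\pi}{N}\rho_{(1),N}(-\pi\,\mathrm{sgn}(x)+2\pi x/N)$). *)

theory Defs
  imports Complex_Main "HOL-Computational_Algebra.Polynomial"
begin

text \<open>A formal series in inverse powers of x is represented by its coefficient
  sequence c, standing for R(x) = sum over n of c n * x^(-n).
  Coefficient of x^m (m an integer) in the formal product x^a * R^(j)(x):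
  since the j-th derivative of x^(-n) is (-1)^j * n(n+1)...(n+j-1) * x^(-n-j),
  it is the contribution of the index n = a - j - m (if n is nonnegative).\<close>
definition xpow_deriv_coeff :: "(nat \<Rightarrow> real) \<Rightarrow> nat \<Rightarrow> nat \<Rightarrow> int \<Rightarrow> real" where
  "xpow_deriv_coeff c a j m =
     (if int a - int j - m \<ge> 0
      then (-1) ^ j * pochhammer (real (nat (int a - int j - m))) j * c (nat (int a - int j - m))
      else 0)"

definition ode_coeff :: "(nat \<Rightarrow> real poly) \<Rightarrow> (nat \<Rightarrow> real) \<Rightarrow> int \<Rightarrow> real" where
  "ode_coeff P c m = (\<Sum>j\<le>5. \<Sum>a\<le>degree (P j). coeff (P j) a * xpow_deriv_coeff c a j m)"

definition gcJ_polys :: "real \<Rightarrow> real \<Rightarrow> nat \<Rightarrow> real poly" where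
  "gcJ_polys p q j =
    (let pt = p - 2 * p^2 in
     if j = 5 then monom 1 5
     else if j = 4 then monom 10 4
     else if j = 3 then monom 1 3 * [:22 + 10 * pt, -20 * q, 20:]
     else if j = 2 then monom 1 2 * [:4 + 44 * pt, -76 * q, 64:]
     else if j = 1 then smult 4 (monom 1 1 *
            [:4 * pt^2 + 7 * pt - 1, - q * (6 + 16 * pt), 4 * (4 * q^2 + 4 * pt + 1), -32 * q, 16:])
     else if j = 0 then smult 8 [:2 * pt^2, - q * (6 * pt - 1), 4 * (q^2 + pt), -4 * q:]
     else 0)"

definition gcJ_formal_solution :: "real \<Rightarrow> real \<Rightarrow> (nat \<Rightarrow> real) \<Rightarrow> bool" where
  "gcJ_formal_solution p q c \<longleftrightarrow> (\<forall>m::int. ode_coeff (gcJ_polys p q) c m = 0)"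

end

theory Submission
  imports Defs
begin

lemma sum_deg: assumes "degree P \<le> N"
  shows "(\<Sum>a\<le>degree P. coeff P a * f a) = (\<Sum>a\<le>N. coeff P a * (f a::real))"
  by (rule sum.mono_neutral_left) (use assms in \<open>auto simp: coeff_eq_0 not_le\<close>)

lemma polys_expl:
  "gcJ_polys p q 5 = [:0,0,0,0,0,1:]"
  "gcJ_polys p q 4 = [:0,0,0,0,10:]"
  "gcJ_polys p q 3 = [:0,0,0,22 + 10 * (p - 2*p^2), -20 * q, 20:]"
  "gcJ_polys p q 2 = [:0,0,4 + 44 * (p - 2*p^2), -76 * q, 64:]"
  "gcJ_polys p q 1 = [:0, 4*(4 * (p - 2*p^2)^2 + 7 * (p - 2*p^2) - 1), 4*(- q * (6 + 16 * (p - 2*p^2))), 16 * (4 * q^2 + 4 * (p - 2*p^2) + 1), -128 * q, 64:]"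
  "gcJ_polys p q 0 = [:16 * (p - 2*p^2)^2, - 8 * q * (6 * (p - 2*p^2) - 1), 32 * (q^2 + (p - 2*p^2)), -32 * q:]"
  by (simp_all add: gcJ_polys_def monom_altdef Let_def eval_nat_numeral)

lemma polys_expl1: "gcJ_polys p q (Suc 0) = [:0, 4*(4 * (p - 2*p^2)^2 + 7 * (p - 2*p^2) - 1), 4*(- q * (6 + 16 * (p - 2*p^2))), 16 * (4 * q^2 + 4 * (p - 2*p^2) + 1), -128 * q, 64:]"
  using polys_expl(5)[of p q] by simp

lemma deg6: "degree [:a0,a1,a2,a3,a4,a5:] \<le> 5"
  by (rule degree_le) (auto simp: coeff_pCons split: nat.split)

lemma deg_polys: "degree (gcJ_polys p q j) \<le> 5"
proof (cases "j \<le> 5")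
  case True
  then have "j=0 \<or> j=1 \<or> j=2 \<or> j=3 \<or> j=4 \<or> j=5" by auto
  then show ?thesis
  proof (elim disjE)
    assume "j=0" then show ?thesis unfolding \<open>j=0\<close> polys_expl using deg6[of "16 * (p - 2*p^2)^2" "- 8 * q * (6 * (p - 2*p^2) - 1)" "32 * (q^2 + (p - 2*p^2))" "-32 * q" 0 0]
      by simp
  next
    assume "j=1" then show ?thesis unfolding \<open>j=1\<close> polys_expl using deg6[of 0 "4*(4 * (p - 2*p^2)^2 + 7 * (p - 2*p^2) - 1)" "4*(- q * (6 + 16 * (p - 2*p^2)))" "16 * (4 * q^2 + 4 * (p - 2*p^2) + 1)" "-128 * q" 64]
      by simp
  next
    assume "j=2" then show ?thesis unfolding \<open>j=2\<close> polys_expl using deg6[of 0 0 "4 + 44 * (p - 2*p^2)" "-76 * q" 64 0]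
      by simp
  next
    assume "j=3" then show ?thesis unfolding \<open>j=3\<close> polys_expl using deg6[of 0 0 0 "22 + 10 * (p - 2*p^2)" "-20 * q" 20]
      by simp
  next
    assume "j=4" then show ?thesis unfolding \<open>j=4\<close> polys_expl using deg6[of 0 0 0 0 10 0]
      by simp
  next
    assume "j=5" then show ?thesis unfolding \<open>j=5\<close> polys_expl using deg6[of 0 0 0 0 0 1]
      by simp
  qed
next
  case False then show ?thesis by (simp add: gcJ_polys_def)
qed

lemma ode_expand: "ode_coeff (gcJ_polys p q) c m =
  (\<Sum>j\<le>5. \<Sum>a\<le>5. coeff (gcJ_polys p q j) a * xpow_deriv_coeff c a j m)"
  unfolding ode_coeff_def by (intro sum.cong refl sum_deg deg_polys)

lemma sum5: "(\<Sum>j\<le>5::nat. f j) = f 0 + f 1 + f 2 + f 3 + f 4 + (f 5::real)"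
  by (simp add: numeral_eq_Suc)

lemma xpow_neg: "j \<le> a \<Longrightarrow> xpow_deriv_coeff c a j (- int s) = (-1)^j * pochhammer (real (s + (a-j))) j * c (s + (a-j))"
proof -
  assume "j \<le> a"
  then have h: "int a - int j - - int s = int (s + (a-j))" by simp
  show ?thesis unfolding xpow_deriv_coeff_def h nat_int by simp
qed

lemma ode_terms: "ode_coeff (gcJ_polys p q) c m =
  (let pt = p - 2*p^2; X = xpow_deriv_coeff c in
   X 5 5 m + 10 * X 4 4 m
   + (22 + 10*pt) * X 3 3 m - 20*q * X 4 3 m + 20 * X 5 3 m
   + (4 + 44*pt) * X 2 2 m - 76*q * X 3 2 m + 64 * X 4 2 m
   + 4*(4*pt^2 + 7*pt - 1) * X 1 1 m + 4*(- q * (6 + 16*pt)) * X 2 1 m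
   + 16*(4*q^2 + 4*pt + 1) * X 3 1 m - 128*q * X 4 1 m + 64 * X 5 1 m
   + 16*pt^2 * X 0 0 m - 8*q*(6*pt - 1) * X 1 0 m + 32*(q^2+pt) * X 2 0 m - 32*q * X 3 0 m)"
  unfolding ode_expand sum5 by (simp add: polys_expl polys_expl1 coeff_pCons' Let_def)

definition L0 where "L0 p q (x::real) = (let pt = p - 2*p^2 in
   - pochhammer x 5 + 10 * pochhammer x 4 - (22 + 10*pt) * pochhammer x 3
      + (4 + 44*pt) * pochhammer x 2 - 4*(4*pt^2 + 7*pt - 1) * x + 16*pt^2)"
definition L1 where "L1 p q (x::real) = (let pt = p - 2*p^2 in
   20*q * pochhammer x 3 - 76*q*pochhammer x 2 + 4*q*(6+16*pt) * x - 8*q*(6*pt-1))"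
definition L2 where "L2 p q (x::real) = (let pt = p - 2*p^2 in
   -20 * pochhammer x 3 + 64 * pochhammer x 2 - 16*(4*q^2+4*pt+1) * x + 32*(q^2+pt))"

lemma main_neg: "ode_coeff (gcJ_polys p q) c (- int s) =
    L0 p q (real s) * c s + L1 p q (real (s+1)) * c (s+1) + L2 p q (real (s+2)) * c (s+2)
  + (128*q*real (s+3) - 32*q) * c (s+3) + (-64 * real (s+4)) * c (s+4)"
  unfolding ode_terms Let_def L0_def L1_def L2_def
  apply (simp add: xpow_neg)
  by algebra

lemma xpow_pos: "xpow_deriv_coeff c a j (int r) = (if j + r \<le> a then (-1)^j * pochhammer (real (a-j-r)) j * c (a-j-r) else 0)"
proof (cases "j + r \<le> a")
  case True
  then have h: "int a - int j - int r = int (a-j-r)" by simp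
  show ?thesis unfolding xpow_deriv_coeff_def h nat_int using True by simp
next
  case False then show ?thesis unfolding xpow_deriv_coeff_def by simp
qed

lemma pos_ge5: "r \<ge> 5 \<Longrightarrow> ode_coeff (gcJ_polys p q) c (int r) = 0"
  unfolding ode_terms Let_def by (simp add: xpow_pos)

lemma pos4: "ode_coeff (gcJ_polys p q) c (int 4) = 0"
  unfolding ode_terms Let_def xpow_pos by simp

lemma pos3: "ode_coeff (gcJ_polys p q) c (int 3) = -64 * c 1 - 32 * q * c 0"
  unfolding ode_terms Let_def xpow_pos by (simp; algebra)

lemma pos2: "ode_coeff (gcJ_polys p q) c (int 2) = -128 * c 2 + (128*q - 32*q) * c 1 + L2 p q 0 * c 0"
  unfolding ode_terms Let_def xpow_pos L2_def by (simp add: pochhammer_0_left; algebra)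

lemma pos1: "ode_coeff (gcJ_polys p q) c (int 1) = -192 * c 3 + (128*q*2 - 32*q) * c 2 + L2 p q 1 * c 1 + L1 p q 0 * c 0"
  unfolding ode_terms Let_def xpow_pos L2_def L1_def by (simp add: pochhammer_0_left pochhammer_Suc eval_nat_numeral; algebra)

lemma sol_char: "gcJ_formal_solution p q c \<longleftrightarrow>
   (-64 * c 1 - 32 * q * c 0 = 0) \<and>
   (-128 * c 2 + (128*q - 32*q) * c 1 + L2 p q 0 * c 0 = 0) \<and>
   (-192 * c 3 + (128*q*2 - 32*q) * c 2 + L2 p q 1 * c 1 + L1 p q 0 * c 0 = 0) \<and>
   (\<forall>s. L0 p q (real s) * c s + L1 p q (real (s+1)) * c (s+1) + L2 p q (real (s+2)) * c (s+2)
  + (128*q*real (s+3) - 32*q) * c (s+3) + (-64 * real (s+4)) * c (s+4) = 0)"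
  (is "?L \<longleftrightarrow> ?R")
proof
  assume ?L
  then have "\<forall>m. ode_coeff (gcJ_polys p q) c m = 0" by (simp add: gcJ_formal_solution_def)
  then have "ode_coeff (gcJ_polys p q) c (int 1) = 0" "ode_coeff (gcJ_polys p q) c (int 2) = 0"
    "ode_coeff (gcJ_polys p q) c (int 3) = 0" "\<And>s. ode_coeff (gcJ_polys p q) c (- int s) = 0" by blast+
  then show ?R unfolding pos1 pos2 pos3 main_neg by blast
next
  assume R: ?R
  show ?L unfolding gcJ_formal_solution_def
  proof
    fix m :: int
    show "ode_coeff (gcJ_polys p q) c m = 0"
    proof (cases "m \<le> 0")
      case True
      then have m: "m = - int (nat (-m))" by simp
      have "ode_coeff (gcJ_polys p q) c (- int (nat (-m))) = 0" unfolding main_neg using R by blast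
      then show ?thesis using m by simp
    next
      case False
      define r where "r = nat m"
      have r: "m = int r" "r \<ge> 1" using False unfolding r_def by auto
      then have "r = 1 \<or> r = 2 \<or> r = 3 \<or> r = 4 \<or> r \<ge> 5" by auto
      then show ?thesis using R r pos1[of p q c] pos2[of p q c] pos3[of p q c] pos4[of p q c] pos_ge5[of r p q c]
        by (elim disjE) simp_all
    qed
  qed
qed

fun cs :: "real \<Rightarrow> real \<Rightarrow> nat \<Rightarrow> real" where
  "cs p q 0 = 1/pi"
| "cs p q (Suc 0) = (-32*q*cs p q 0)/64"
| "cs p q (Suc (Suc 0)) = ((128*q - 32*q) * cs p q (Suc 0) + L2 p q 0 * cs p q 0)/128"
| "cs p q (Suc (Suc (Suc 0))) = ((128*q*2 - 32*q) * cs p q (Suc (Suc 0)) + L2 p q 1 * cs p q (Suc 0) + L1 p q 0 * cs p q 0)/192"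
| "cs p q (Suc (Suc (Suc (Suc n)))) = (L0 p q (real n) * cs p q n + L1 p q (real (n+1)) * cs p q (Suc n)
     + L2 p q (real (n+2)) * cs p q (Suc (Suc n)) + (128*q*real (n+3) - 32*q) * cs p q (Suc (Suc (Suc n)))) / (64 * real (n+4))"

lemma cs_rec: "cs p q (n+4) = (L0 p q (real n) * cs p q n + L1 p q (real (n+1)) * cs p q (n+1)
     + L2 p q (real (n+2)) * cs p q (n+2) + (128*q*real (n+3) - 32*q) * cs p q (n+3)) / (64 * real (n+4))"
proof -
  have e: "n+4 = Suc (Suc (Suc (Suc n)))" "n+3 = Suc (Suc (Suc n))" "n+2 = Suc (Suc n)" "n+1 = Suc n" by simp_all
  show ?thesis unfolding e by (simp add: algebra_simps)
qed

lemma cs_sol: "gcJ_formal_solution p q (cs p q)"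
  unfolding sol_char
proof (intro conjI allI)
  fix s
  have "real (s+4) > 0" by simp
  then show "L0 p q (real s) * cs p q s + L1 p q (real (s+1)) * cs p q (s+1) + L2 p q (real (s+2)) * cs p q (s+2)
  + (128*q*real (s+3) - 32*q) * cs p q (s+3) + (-64 * real (s+4)) * cs p q (s+4) = 0"
    unfolding cs_rec[of p q s] by (simp add: field_simps)
qed (auto simp: numeral_2_eq_2 numeral_3_eq_3 field_simps)

lemma uniq: assumes "gcJ_formal_solution p q c" "c 0 = 1/pi" shows "c n = cs p q n"
proof (induction n rule: less_induct)
  case (less n)
  note E = assms(1)[unfolded sol_char]
  have "n < 4 \<or> (\<exists>s. n = s+4)" by presburger
  moreover {
    assume "n < 4"
    then have "n = 0 \<or> n = 1 \<or> n = 2 \<or> n = 3" by auto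
    moreover have c1: "c 1 = cs p q 1" using E assms(2) by simp
    moreover have c2: "c 2 = cs p q 2"
    proof -
      have "c 2 = ((128*q - 32*q) * c 1 + L2 p q 0 * c 0)/128" using E by simp
      then show ?thesis using c1 assms(2) by (simp add: numeral_2_eq_2)
    qed
    moreover have "c 3 = cs p q 3"
    proof -
      have "c 3 = ((128*q*2 - 32*q) * c 2 + L2 p q 1 * c 1 + L1 p q 0 * c 0)/192" using E by simp
      then show ?thesis using c1 c2 assms(2) by (simp add: numeral_2_eq_2 numeral_3_eq_3)
    qed
    ultimately have "c n = cs p q n" using assms(2) by auto
  }
  moreover {
    fix s assume n: "n = s+4"
    then have IH: "c s = cs p q s" "c (s+1) = cs p q (s+1)" "c (s+2) = cs p q (s+2)" "c (s+3) = cs p q (s+3)"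
      using less by auto
    have "real (s+4) > 0" by simp
    have "c (s+4) = (L0 p q (real s) * c s + L1 p q (real (s+1)) * c (s+1)
     + L2 p q (real (s+2)) * c (s+2) + (128*q*real (s+3) - 32*q) * c (s+3)) / (64 * real (s+4))"
      using E \<open>real (s+4) > 0\<close> by (simp add: field_simps)
    then have "c n = cs p q n" unfolding n cs_rec[of p q s] IH .
  }
  ultimately show ?case by blast
qed

lemma poch_exp: "pochhammer (x::real) 2 = x*(x+1)" "pochhammer x 3 = x*(x+1)*(x+2)"
  "pochhammer x 4 = x*(x+1)*(x+2)*(x+3)" "pochhammer x 5 = x*(x+1)*(x+2)*(x+3)*(x+4)"
  by (simp_all add: pochhammer_Suc eval_nat_numeral algebra_simps)

lemma cs_vals:
  "cs p q 1 = -q/(2*pi)"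
  "cs p q 2 = (2*(p - 2*p^2) - q^2)/(8*pi)"
  "cs p q 3 = - (q * (-1 - 2 * (p - 2*p^2) + q^2)) / (16 * pi)"
  "cs p q 4 = (-16 * (p - 2*p^2) - 4 * (p - 2*p^2)^2 + 19 * q^2 + 12 * (p - 2*p^2) * q^2 - 5 * q^4) / (128 * pi)"
proof -
  show c1: "cs p q 1 = -q/(2*pi)" by simp
  show c2: "cs p q 2 = (2*(p - 2*p^2) - q^2)/(8*pi)"
    by (simp add: numeral_2_eq_2 L2_def poch_exp pochhammer_0_left field_simps; algebra)
  show c3: "cs p q 3 = - (q * (-1 - 2 * (p - 2*p^2) + q^2)) / (16 * pi)"
  proof -
    have c1': "cs p q (Suc 0) = -q/(2*pi)" using c1 by simp
    have c2': "cs p q (Suc (Suc 0)) = (2*(p - 2*p^2) - q^2)/(8*pi)" using c2 by (simp only: numeral_2_eq_2)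
    have "cs p q 3 = cs p q (Suc (Suc (Suc 0)))" by (simp only: numeral_3_eq_3)
    also have "\<dots> = ((128*q*2 - 32*q) * cs p q (Suc (Suc 0)) + L2 p q 1 * cs p q (Suc 0) + L1 p q 0 * cs p q 0)/192"
      by (rule cs.simps(4))
    also have "\<dots> = - (q * (-1 - 2 * (p - 2*p^2) + q^2)) / (16 * pi)"
      unfolding c1' c2' cs.simps(1) by (simp add: L2_def L1_def poch_exp pochhammer_0_left field_simps; algebra)
    finally show ?thesis .
  qed
  have "cs p q 4 = cs p q (0+4)" by simp
  also have "\<dots> = (L0 p q 0 * cs p q 0 + L1 p q 1 * cs p q 1
     + L2 p q 2 * cs p q 2 + (128*q*3 - 32*q) * cs p q 3) / (64 * 4)"
    unfolding cs_rec[of p q 0] by (simp del: cs.simps add: numeral_2_eq_2)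
  also have "\<dots> = (-16 * (p - 2*p^2) - 4 * (p - 2*p^2)^2 + 19 * q^2 + 12 * (p - 2*p^2) * q^2 - 5 * q^4) / (128 * pi)"
    unfolding c1 c2 c3 cs.simps(1) by (simp del: cs.simps add: L0_def L1_def L2_def poch_exp pochhammer_0_left field_simps; algebra)
  finally show "cs p q 4 = (-16 * (p - 2*p^2) - 4 * (p - 2*p^2)^2 + 19 * q^2 + 12 * (p - 2*p^2) * q^2 - 5 * q^4) / (128 * pi)" .
qed

lemma recur:
  fixes g :: "nat \<Rightarrow> real"
  assumes E: "\<forall>s. L0 p q (real s) * c s + L1 p q (real (s+1)) * c (s+1) + L2 p q (real (s+2)) * c (s+2)
  + (128*q*real (s+3) - 32*q) * c (s+3) + (-64 * real (s+4)) * c (s+4) = 0"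
    and G: "\<forall>n\<ge>1. c n = (1 / pi) * pi ^ n * g n" and n: "n \<ge> 1"
    and pt: "pt = p - 2 * p^2"
  shows "64 * (real n + 4) * pi^4 * g (n + 4)
          - 32 * q * (4 * real n + 11) * pi^3 * g (n + 3)
          + 4 * (32 + 54 * real n + 29 * real n^2 + 5 * real n^3 + 8 * pt * (2 * real n + 3)
                 + 24 * q^2 + 16 * real n * q^2) * pi^2 * g (n + 2)
          - 4 * q * (4 * pt * (1 + 4 * real n) + real n * (4 + 11 * real n + 5 * real n^2)) * pi * g (n + 1)
          + (real n - 1) * (16 * pt^2 + 2 * pt * real n * (5 * real n - 2)
                 + real n^2 * (real n^2 + real n - 2)) * g n = 0" (is "?S = 0")
proof -
  let ?I = "L0 p q (real n) * g n + pi * L1 p q (real (n+1)) * g (n+1) + pi^2 * L2 p q (real (n+2)) * g (n+2)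
    + pi^3 * (128*q*real (n+3) - 32*q) * g (n+3) + pi^4 * (-64 * real (n+4)) * g (n+4)"
  have e: "L0 p q (real n) * c n + L1 p q (real (n+1)) * c (n+1) + L2 p q (real (n+2)) * c (n+2)
  + (128*q*real (n+3) - 32*q) * c (n+3) + (-64 * real (n+4)) * c (n+4) = 0" using E by blast
  have cs: "c n = (1 / pi) * pi ^ n * g n" "c (n+1) = (1 / pi) * pi ^ (n+1) * g (n+1)"
    "c (n+2) = (1 / pi) * pi ^ (n+2) * g (n+2)" "c (n+3) = (1 / pi) * pi ^ (n+3) * g (n+3)"
    "c (n+4) = (1 / pi) * pi ^ (n+4) * g (n+4)" using G n by auto
  have "((1 / pi) * pi ^ n) * ?I = 0"
  proof -
    have "((1 / pi) * pi ^ n) * ?I = L0 p q (real n) * c n + L1 p q (real (n+1)) * c (n+1) + L2 p q (real (n+2)) * c (n+2)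
  + (128*q*real (n+3) - 32*q) * c (n+3) + (-64 * real (n+4)) * c (n+4)"
      unfolding cs power_add by (simp add: algebra_simps)
    then show ?thesis using e by simp
  qed
  then have I: "?I = 0" by simp
  have "?S = - ?I" unfolding pt L0_def L1_def L2_def Let_def poch_exp of_nat_add of_nat_numeral of_nat_1 by algebra
  then show ?thesis using I by simp
qed

theorem proposition3p2:
  fixes p q :: real
  defines "pt \<equiv> p - 2 * p^2"
  shows "(\<exists>!c :: nat \<Rightarrow> real. c 0 = 1 / pi \<and> gcJ_formal_solution p q c)
    \<and> (\<forall>(c :: nat \<Rightarrow> real) (g :: nat \<Rightarrow> real).
         c 0 = 1 / pi \<and> gcJ_formal_solution p q c \<and>
         (\<forall>n\<ge>1. c n = (1 / pi) * pi ^ n * g n) \<longrightarrow>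
         g 1 = - q / (2 * pi)
       \<and> g 2 = (2 * pt - q^2) / (8 * pi^2)
       \<and> g 3 = - (q * (-1 - 2 * pt + q^2)) / (16 * pi^3)
       \<and> g 4 = (-16 * pt - 4 * pt^2 + 19 * q^2 + 12 * pt * q^2 - 5 * q^4) / (128 * pi^4)
       \<and> (\<forall>n::nat. n \<ge> 1 \<longrightarrow>
            64 * (real n + 4) * pi^4 * g (n + 4)
          - 32 * q * (4 * real n + 11) * pi^3 * g (n + 3)
          + 4 * (32 + 54 * real n + 29 * real n^2 + 5 * real n^3 + 8 * pt * (2 * real n + 3)
                 + 24 * q^2 + 16 * real n * q^2) * pi^2 * g (n + 2)
          - 4 * q * (4 * pt * (1 + 4 * real n) + real n * (4 + 11 * real n + 5 * real n^2)) * pi * g (n + 1)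
          + (real n - 1) * (16 * pt^2 + 2 * pt * real n * (5 * real n - 2)
                 + real n^2 * (real n^2 + real n - 2)) * g n = 0))"
proof (intro conjI allI impI)
  show "\<exists>!c :: nat \<Rightarrow> real. c 0 = 1 / pi \<and> gcJ_formal_solution p q c"
  proof (rule ex1I[of _ "cs p q"])
    show "cs p q 0 = 1 / pi \<and> gcJ_formal_solution p q (cs p q)" using cs_sol by simp
  next
    fix c assume "c 0 = 1 / pi \<and> gcJ_formal_solution p q c"
    then show "c = cs p q" using uniq by blast
  qed
next
  fix c g :: "nat \<Rightarrow> real"
  assume H: "c 0 = 1 / pi \<and> gcJ_formal_solution p q c \<and> (\<forall>n\<ge>1. c n = (1 / pi) * pi ^ n * g n)"
  then have ceq: "\<And>n. c n = cs p q n" using uniq by blast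
  have G: "\<forall>n\<ge>1. c n = (1 / pi) * pi ^ n * g n" using H by blast
  have gk: "g k = cs p q k * pi / pi^k" if "k \<ge> 1" for k
  proof -
    have "c k = (1 / pi) * pi ^ k * g k" using G that by blast
    then show ?thesis unfolding ceq by (simp add: field_simps)
  qed
  have g1: "g 1 = cs p q 1 * pi / pi^1" by (rule gk) simp
  have g2: "g 2 = cs p q 2 * pi / pi^2" by (rule gk) simp
  have g3: "g 3 = cs p q 3 * pi / pi^3" by (rule gk) simp
  have g4: "g 4 = cs p q 4 * pi / pi^4" by (rule gk) simp
  show "g 1 = - q / (2 * pi)" unfolding g1 cs_vals by simp
  show "g 2 = (2 * pt - q^2) / (8 * pi^2)" unfolding g2 cs_vals pt_def by (simp add: field_simps power2_eq_square)
  show "g 3 = - (q * (-1 - 2 * pt + q^2)) / (16 * pi^3)" unfolding g3 cs_vals pt_def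
    by (simp add: field_simps power2_eq_square power3_eq_cube)
  show "g 4 = (-16 * pt - 4 * pt^2 + 19 * q^2 + 12 * pt * q^2 - 5 * q^4) / (128 * pi^4)" unfolding g4 cs_vals pt_def
    by (simp add: field_simps eval_nat_numeral)
  fix n :: nat assume n: "n \<ge> 1"
  have E: "\<forall>s. L0 p q (real s) * c s + L1 p q (real (s+1)) * c (s+1) + L2 p q (real (s+2)) * c (s+2)
  + (128*q*real (s+3) - 32*q) * c (s+3) + (-64 * real (s+4)) * c (s+4) = 0"
    using H unfolding sol_char by blast
  show "64 * (real n + 4) * pi^4 * g (n + 4)
          - 32 * q * (4 * real n + 11) * pi^3 * g (n + 3)
          + 4 * (32 + 54 * real n + 29 * real n^2 + 5 * real n^3 + 8 * pt * (2 * real n + 3)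
                 + 24 * q^2 + 16 * real n * q^2) * pi^2 * g (n + 2)
          - 4 * q * (4 * pt * (1 + 4 * real n) + real n * (4 + 11 * real n + 5 * real n^2)) * pi * g (n + 1)
          + (real n - 1) * (16 * pt^2 + 2 * pt * real n * (5 * real n - 2)
                 + real n^2 * (real n^2 + real n - 2)) * g n = 0"
    by (rule recur[OF E G n pt_def[THEN meta_eq_to_obj_eq]])
qed

end
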